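(* Let $W$ be the complement of the right-handed Whitehead link with its standard ideal triangulation $\mathcal{T}_W$ by four ideal tetrahedra $\sigma_0,\dots,\sigma_3$, and let normal $Q$-coordinates be ordered as $(q_0,q_0',q_0'',q_1,q_1',q_1'',q_2,q_2',q_2'',q_3,q_3',q_3'')\in\mathbb{R}^{12}$. Define linear functionals $$\nu(\mathcal{M}_0)=q_1-q_1''+q_2'-q_2''-q_3+q_3',\qquad \nu(\mathcal{L}_0^t)=-2q_1'+2q_1''-2q_2'+2q_2'',$$ $$\nu(\mathcal{M}_1)=q_0-q_0'-q_1'+q_1''-q_3+q_3'',\qquad \nu(\mathcal{L}_1^t)=-2q_0'+2q_0''-2q_2'+2q_2'',$$ and for $N\in\mathbb{R}^{12}$ let $\beta(N)=(\nu(\mathcal{L}_0^t)(N),-\nu(\mathcal{M}_0)(N),\nu(\mathcal{L}_1^t)(N),-\nu(\mathcal{M}_1)(N))$. Let $V_1,V_2,V_3,V_4\in\mathbb{R}^{12}$ be the vectors whose only nonzero coordinates are equal to $1$ and are, respectively, $\{q_0,q_2\}$, $\{q_1,q_2\}$, $\{q_1,q_3\}$, $\{q_0,q_3\}$. Let $S,S'$ be embedded spun-normal surfaces in $W$ with respect to $\mathcal{T}_W$, with normal $Q$-coordinates $N(S),N(S')$. If $N(S)$ is not a nonnegative linear combination of $V_1,V_2,V_3,V_4$ and $\beta(N(S))=\beta(N(S'))$, then $N(S)=N(S')$; that is, $S$ is uniquely determined (up to normal isotopy and adding or removing vertex-linking components) by its transversely oriented boundary curves.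
   Context: $\mathcal{T}_W$ is the four-tetrahedron ideal triangulation of $W$ obtained by subdividing an ideal octahedron (triangulation m129:#2 of Regina's cusped census); $W$ has two cusps, cusp 0 and cusp 1, with meridians $\mathcal{M}_i$ and null-homologous longitudes $\mathcal{L}_i^t$. A (spun-)normal surface meets each ideal tetrahedron in normal triangles and quadrilaterals, possibly infinitely many triangles near the cusps. For each tetrahedron $\sigma_i$ the three quadrilateral types are $q_i,q_i',q_i''$, separating its vertices as $01/23$, $03/12$, $02/13$ respectively; $N(S)(q)$ counts quadrilaterals of type $q$ in $S$. The normal $Q$-coordinates of embedded spun-normal surfaces are exactly the integer vectors $N\ge 0$ that are admissible (in each tetrahedron at most one of the three quadrilateral coordinates is nonzero) and satisfy the $Q$-matching equations, which for $\mathcal{T}_W$ are equivalent to $$0=q_0'-q_0''+q_1'-q_1''+q_2'-q_2''+q_3'-q_3'',\qquad 0=q_0-q_0'+q_1-q_1'-q_2+q_2'-q_3+q_3';$$ and $N(S)$ determines $S$ up to normal isotopy and adding or removing vertex-linking surfaces (normal surfaces made of triangles only). The vector $\beta(N(S))$ records the signed intersection numbers of $S$ with the peripheral curves, i.e.\ the transversely oriented boundary curves of $S$. The nonnegative combinations of $V_1,\dots,V_4$ projectivise to the "centre square" of the projective admissible solution space. *)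

theory Defs
  imports Main "HOL-Analysis.Analysis"
begin

text \<open>Normal Q-coordinates for the triangulation T_W are vectors in R^12 indexed
by (tetrahedron i, quad type k) with i < 4, k < 3; k = 0,1,2 stand for q_i, q_i', q_i''.\<close>

type_synonym qvec = "real list"

definition qc :: "qvec \<Rightarrow> nat \<Rightarrow> nat \<Rightarrow> real" where
  "qc N i k = N ! (3 * i + k)"

definition nu_M0 :: "qvec \<Rightarrow> real" where
  "nu_M0 N = qc N 1 0 - qc N 1 2 + qc N 2 1 - qc N 2 2 - qc N 3 0 + qc N 3 1"

definition nu_L0 :: "qvec \<Rightarrow> real" where
  "nu_L0 N = - 2 * qc N 1 1 + 2 * qc N 1 2 - 2 * qc N 2 1 + 2 * qc N 2 2"

definition nu_M1 :: "qvec \<Rightarrow> real" where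
  "nu_M1 N = qc N 0 0 - qc N 0 1 - qc N 1 1 + qc N 1 2 - qc N 3 0 + qc N 3 2"

definition nu_L1 :: "qvec \<Rightarrow> real" where
  "nu_L1 N = - 2 * qc N 0 1 + 2 * qc N 0 2 - 2 * qc N 2 1 + 2 * qc N 2 2"

definition beta :: "qvec \<Rightarrow> real \<times> real \<times> real \<times> real" where
  "beta N = (nu_L0 N, - nu_M0 N, nu_L1 N, - nu_M1 N)"

definition unitq :: "nat \<Rightarrow> nat \<Rightarrow> qvec" where
  "unitq a b = map (\<lambda>p. if p = 3 * a \<or> p = 3 * b then 1 else 0) [0..<12]"

definition V1 :: qvec where "V1 = unitq 0 2"
definition V2 :: qvec where "V2 = unitq 1 2"
definition V3 :: qvec where "V3 = unitq 1 3"
definition V4 :: qvec where "V4 = unitq 0 3"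

definition nonneg_comb_V :: "qvec \<Rightarrow> bool" where
  "nonneg_comb_V N \<longleftrightarrow> (\<exists>a b c d :: real. a \<ge> 0 \<and> b \<ge> 0 \<and> c \<ge> 0 \<and> d \<ge> 0 \<and>
     N = map (\<lambda>p. a * V1 ! p + b * V2 ! p + c * V3 ! p + d * V4 ! p) [0..<12])"

definition admissible :: "qvec \<Rightarrow> bool" where
  "admissible N \<longleftrightarrow> (\<forall>i<4. \<forall>k<3. \<forall>l<3. k \<noteq> l \<longrightarrow> qc N i k = 0 \<or> qc N i l = 0)"

definition Q_matching :: "qvec \<Rightarrow> bool" where
  "Q_matching N \<longleftrightarrow>
     0 = qc N 0 1 - qc N 0 2 + qc N 1 1 - qc N 1 2 + qc N 2 1 - qc N 2 2 + qc N 3 1 - qc N 3 2 \<and>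
     0 = qc N 0 0 - qc N 0 1 + qc N 1 0 - qc N 1 1 - qc N 2 0 + qc N 2 1 - qc N 3 0 + qc N 3 1"

text \<open>Normal Q-coordinates of embedded spun-normal surfaces in W w.r.t. T_W:
exactly the nonnegative integer admissible solutions of the Q-matching equations.\<close>
definition spun_normal_Q :: "qvec \<Rightarrow> bool" where
  "spun_normal_Q N \<longleftrightarrow> length N = 12 \<and> (\<forall>x\<in>set N. x \<in> \<int> \<and> x \<ge> 0) \<and>
     admissible N \<and> Q_matching N"

end

theory Submission
  imports Defs
begin

lemma core:
  fixes a0 b0 c0 a1 b1 c1 a2 b2 c2 a3 b3 c3 x0 y0 z0 x1 y1 z1 x2 y2 z2 x3 y3 z3 :: real
  assumes "a0\<ge>0" "b0\<ge>0" "c0\<ge>0" "a1\<ge>0" "b1\<ge>0" "c1\<ge>0" "a2\<ge>0" "b2\<ge>0" "c2\<ge>0" "a3\<ge>0" "b3\<ge>0" "c3\<ge>0"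
  "x0\<ge>0" "y0\<ge>0" "z0\<ge>0" "x1\<ge>0" "y1\<ge>0" "z1\<ge>0" "x2\<ge>0" "y2\<ge>0" "z2\<ge>0" "x3\<ge>0" "y3\<ge>0" "z3\<ge>0"
  "(b0=0\<and>c0=0)\<or>(a0=0\<and>c0=0)\<or>(a0=0\<and>b0=0)"
  "(b1=0\<and>c1=0)\<or>(a1=0\<and>c1=0)\<or>(a1=0\<and>b1=0)"
  "(b2=0\<and>c2=0)\<or>(a2=0\<and>c2=0)\<or>(a2=0\<and>b2=0)"
  "(b3=0\<and>c3=0)\<or>(a3=0\<and>c3=0)\<or>(a3=0\<and>b3=0)"
  "(y0=0\<and>z0=0)\<or>(x0=0\<and>z0=0)\<or>(x0=0\<and>y0=0)"
  "(y1=0\<and>z1=0)\<or>(x1=0\<and>z1=0)\<or>(x1=0\<and>y1=0)"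
  "(y2=0\<and>z2=0)\<or>(x2=0\<and>z2=0)\<or>(x2=0\<and>y2=0)"
  "(y3=0\<and>z3=0)\<or>(x3=0\<and>z3=0)\<or>(x3=0\<and>y3=0)"
  "0 = b0-c0+b1-c1+b2-c2+b3-c3"
  "0 = a0-b0+a1-b1-a2+b2-a3+b3"
  "0 = y0-z0+y1-z1+y2-z2+y3-z3"
  "0 = x0-y0+x1-y1-x2+y2-x3+y3"
  "a1-c1+b2-c2-a3+b3 = x1-z1+y2-z2-x3+y3"
  "-2*b1+2*c1-2*b2+2*c2 = -2*y1+2*z1-2*y2+2*z2"
  "a0-b0-b1+c1-a3+c3 = x0-y0-y1+z1-x3+z3"
  "-2*b0+2*c0-2*b2+2*c2 = -2*y0+2*z0-2*y2+2*z2"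
  "b0+c0+b1+c1+b2+c2+b3+c3 > 0"
  shows "a0=x0 \<and> b0=y0 \<and> c0=z0 \<and> a1=x1 \<and> b1=y1 \<and> c1=z1 \<and> a2=x2 \<and> b2=y2 \<and> c2=z2 \<and> a3=x3 \<and> b3=y3 \<and> c3=z3"
  using assms by smt

lemma upt12: "[0..<12] = [0,1,2,3,4,5,6,7,8,9,10,11::nat]"
  by (simp add: numeral_eq_Suc upt_rec)

lemma list12:
  assumes "length (N::real list) = 12"
  shows "\<exists>n0 n1 n2 n3 n4 n5 n6 n7 n8 n9 n10 n11. N = [n0,n1,n2,n3,n4,n5,n6,n7,n8,n9,n10,n11]"
proof -
  have "N = map (nth N) [0..<length N]" by (simp add: map_nth)
  then have "N = [N!0,N!1,N!2,N!3,N!4,N!5,N!6,N!7,N!8,N!9,N!10,N!11]" using assms upt12 by simp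
  then show ?thesis by blast
qed

lemma comb_lemma:
  fixes n0 n3 n6 n9 :: real
  assumes "n0\<ge>0" "n3\<ge>0" "n6\<ge>0" "n9\<ge>0" "n0+n3 = n6+n9"
  shows "nonneg_comb_V [n0,0,0,n3,0,0,n6,0,0,n9,0,0]"
proof (cases "n0 \<le> n6")
  case True
  show ?thesis unfolding nonneg_comb_V_def V1_def V2_def V3_def V4_def unitq_def upt12
    apply (rule exI[of _ n0], rule exI[of _ "n6-n0"], rule exI[of _ n9], rule exI[of _ 0])
    using assms True by simp
next
  case False
  show ?thesis unfolding nonneg_comb_V_def V1_def V2_def V3_def V4_def unitq_def upt12
    apply (rule exI[of _ n6], rule exI[of _ 0], rule exI[of _ n3], rule exI[of _ "n0-n6"])
    using assms False by simp
qed

theorem mainTheorem5: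
  fixes N N' :: qvec
  assumes "spun_normal_Q N" and "spun_normal_Q N'"
    and "\<not> nonneg_comb_V N"
    and "beta N = beta N'"
  shows "N = N'"
proof -
  obtain n0 n1 n2 n3 n4 n5 n6 n7 n8 n9 n10 n11 where N: "N = [n0,n1,n2,n3,n4,n5,n6,n7,n8,n9,n10,n11]"
    using list12[of N] assms(1) unfolding spun_normal_Q_def by auto
  obtain m0 m1 m2 m3 m4 m5 m6 m7 m8 m9 m10 m11 where N': "N' = [m0,m1,m2,m3,m4,m5,m6,m7,m8,m9,m10,m11]"
    using list12[of N'] assms(2) unfolding spun_normal_Q_def by auto
  have A: "admissible N" "Q_matching N" "\<forall>x\<in>set N. x \<ge> 0"
    using assms(1) unfolding spun_normal_Q_def by auto
  have B: "admissible N'" "Q_matching N'" "\<forall>x\<in>set N'. x \<ge> 0"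
    using assms(2) unfolding spun_normal_Q_def by auto
  have adm: "\<And>i. i < 4 \<Longrightarrow> (qc M i 1 = 0 \<and> qc M i 2 = 0) \<or> (qc M i 0 = 0 \<and> qc M i 2 = 0) \<or> (qc M i 0 = 0 \<and> qc M i 1 = 0)"
    if "admissible M" for M
  proof -
    fix i :: nat assume "i < 4"
    then have h: "\<forall>k<3. \<forall>l<3. k \<noteq> l \<longrightarrow> qc M i k = 0 \<or> qc M i l = 0"
      using that unfolding admissible_def by blast
    have "qc M i 0 = 0 \<or> qc M i 1 = 0" "qc M i 0 = 0 \<or> qc M i 2 = 0" "qc M i 1 = 0 \<or> qc M i 2 = 0"
      using h[rule_format, of 0 1] h[rule_format, of 0 2] h[rule_format, of 1 2] by auto
    then show "(qc M i 1 = 0 \<and> qc M i 2 = 0) \<or> (qc M i 0 = 0 \<and> qc M i 2 = 0) \<or> (qc M i 0 = 0 \<and> qc M i 1 = 0)" by blast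
  qed
  have a0: "(n1=0\<and>n2=0)\<or>(n0=0\<and>n2=0)\<or>(n0=0\<and>n1=0)"
    using adm[OF A(1), of 0] by (simp add: N qc_def)
  have a1: "(n4=0\<and>n5=0)\<or>(n3=0\<and>n5=0)\<or>(n3=0\<and>n4=0)"
    using adm[OF A(1), of 1] by (simp add: N qc_def)
  have a2: "(n7=0\<and>n8=0)\<or>(n6=0\<and>n8=0)\<or>(n6=0\<and>n7=0)"
    using adm[OF A(1), of 2] by (simp add: N qc_def)
  have a3: "(n10=0\<and>n11=0)\<or>(n9=0\<and>n11=0)\<or>(n9=0\<and>n10=0)"
    using adm[OF A(1), of 3] by (simp add: N qc_def)
  have b0: "(m1=0\<and>m2=0)\<or>(m0=0\<and>m2=0)\<or>(m0=0\<and>m1=0)"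
    using adm[OF B(1), of 0] by (simp add: N' qc_def)
  have b1: "(m4=0\<and>m5=0)\<or>(m3=0\<and>m5=0)\<or>(m3=0\<and>m4=0)"
    using adm[OF B(1), of 1] by (simp add: N' qc_def)
  have b2: "(m7=0\<and>m8=0)\<or>(m6=0\<and>m8=0)\<or>(m6=0\<and>m7=0)"
    using adm[OF B(1), of 2] by (simp add: N' qc_def)
  have b3: "(m10=0\<and>m11=0)\<or>(m9=0\<and>m11=0)\<or>(m9=0\<and>m10=0)"
    using adm[OF B(1), of 3] by (simp add: N' qc_def)
  have nn: "n0\<ge>0" "n1\<ge>0" "n2\<ge>0" "n3\<ge>0" "n4\<ge>0" "n5\<ge>0" "n6\<ge>0" "n7\<ge>0" "n8\<ge>0" "n9\<ge>0" "n10\<ge>0" "n11\<ge>0"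
    using A(3) by (simp_all add: N)
  have mm: "m0\<ge>0" "m1\<ge>0" "m2\<ge>0" "m3\<ge>0" "m4\<ge>0" "m5\<ge>0" "m6\<ge>0" "m7\<ge>0" "m8\<ge>0" "m9\<ge>0" "m10\<ge>0" "m11\<ge>0"
    using B(3) by (simp_all add: N')
  have qn: "0 = n1-n2+n4-n5+n7-n8+n10-n11" "0 = n0-n1+n3-n4-n6+n7-n9+n10"
    using A(2) by (simp_all add: N qc_def Q_matching_def)
  have qm: "0 = m1-m2+m4-m5+m7-m8+m10-m11" "0 = m0-m1+m3-m4-m6+m7-m9+m10"
    using B(2) by (simp_all add: N' qc_def Q_matching_def)
  have be: "n3-n5+n7-n8-n9+n10 = m3-m5+m7-m8-m9+m10"
    "-2*n4+2*n5-2*n7+2*n8 = -2*m4+2*m5-2*m7+2*m8"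
    "n0-n1-n4+n5-n9+n11 = m0-m1-m4+m5-m9+m11"
    "-2*n1+2*n2-2*n7+2*n8 = -2*m1+2*m2-2*m7+2*m8"
    using assms(4) by (simp_all add: N N' qc_def beta_def nu_M0_def nu_M1_def nu_L0_def nu_L1_def)
  have pos: "n1+n2+n4+n5+n7+n8+n10+n11 > 0"
  proof (rule ccontr)
    assume "\<not> ?thesis"
    then have z: "n1=0" "n2=0" "n4=0" "n5=0" "n7=0" "n8=0" "n10=0" "n11=0" using nn by linarith+
    have "nonneg_comb_V N" unfolding N z
      by (rule comb_lemma) (use nn qn z in linarith)+
    then show False using assms(3) by blast
  qed
  have "n0=m0 \<and> n1=m1 \<and> n2=m2 \<and> n3=m3 \<and> n4=m4 \<and> n5=m5 \<and> n6=m6 \<and> n7=m7 \<and> n8=m8 \<and> n9=m9 \<and> n10=m10 \<and> n11=m11"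
    by (rule core[OF nn mm a0 a1 a2 a3 b0 b1 b2 b3 qn qm be pos])
  then show ?thesis by (simp add: N N')
qed

end
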